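(* Let $X$ be an $E\mathcal M$-simplicial set, let $x\in X_n$ be co-infinitely supported, let $u_0,\dots,u_n\in\mathcal M$, let $0\le k\le n$, and let $A\subset\omega$ be co-infinite such that $(u_0,\dots,u_n).x$ is $k$-supported on $u_k(A)$. Then $x$ is $k$-supported on $A$.
   Context: $\omega=\{1,2,\dots\}$, $\mathcal M$ the monoid of injections $\omega\to\omega$, $\mathcal M_A$ the submonoid fixing $A\subset\omega$ elementwise; $A$ co-infinite if $\omega\setminus A$ is infinite. $E\mathcal M$ is the simplicial monoid with $(E\mathcal M)_n=\mathcal M^{1+n}$, pointwise multiplication, structure maps by precomposition; an $E\mathcal M$-simplicial set is a simplicial set with left $E\mathcal M$-action. $x\in X_n$ is $k$-supported on $A$ if $i_k(g).x=x$ for all $g\in\mathcal M_A$, where $i_k\colon\mathcal M\to\mathcal M^{1+n}$ is the inclusion of the $(1+k)$-th factor. $x$ is co-infinitely supported if for every $0\le k\le n$ there exists a co-infinite $A_k$ on which $x$ is $k$-supported. *)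

theory Defs
  imports Main
begin

text \<open>The countably infinite set omega is modelled by the type nat (a relabelling of {1,2,...}).
  The monoid M of injections omega -> omega, with composition as multiplication.\<close>

definition M :: "(nat \<Rightarrow> nat) set" where
  "M = {f. inj f}"

definition M_fix :: "nat set \<Rightarrow> (nat \<Rightarrow> nat) set" where
  "M_fix A = {f \<in> M. \<forall>a\<in>A. f a = a}"

definition coinfinite :: "nat set \<Rightarrow> bool" where
  "coinfinite A \<longleftrightarrow> infinite (UNIV - A)"

text \<open>Simplicial operators: monotone maps alpha : [m] -> [n], [m] = {0..m}.\<close>
definition simp_op :: "nat \<Rightarrow> nat \<Rightarrow> (nat \<Rightarrow> nat) \<Rightarrow> bool" where
  "simp_op m n \<alpha> \<longleftrightarrow> (\<forall>i\<le>m. \<alpha> i \<le> n) \<and> (\<forall>i j. i \<le> j \<and> j \<le> m \<longrightarrow> \<alpha> i \<le> \<alpha> j)"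

text \<open>A simplicial set: levels X n, and for each alpha : [m] -> [n] a map
  F m n alpha : X n -> X m (contravariant functor on the simplex category).\<close>
definition simplicial_set ::
  "(nat \<Rightarrow> 'a set) \<Rightarrow> (nat \<Rightarrow> nat \<Rightarrow> (nat \<Rightarrow> nat) \<Rightarrow> 'a \<Rightarrow> 'a) \<Rightarrow> bool" where
  "simplicial_set X F \<longleftrightarrow>
     (\<forall>m n \<alpha> x. simp_op m n \<alpha> \<and> x \<in> X n \<longrightarrow> F m n \<alpha> x \<in> X m) \<and>
     (\<forall>m n \<alpha> \<alpha>' x. simp_op m n \<alpha> \<and> (\<forall>i\<le>m. \<alpha> i = \<alpha>' i) \<and> x \<in> X n
         \<longrightarrow> F m n \<alpha> x = F m n \<alpha>' x) \<and>
     (\<forall>n x. x \<in> X n \<longrightarrow> F n n id x = x) \<and>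
     (\<forall>l m n \<alpha> \<beta> x. simp_op m n \<alpha> \<and> simp_op l m \<beta> \<and> x \<in> X n
         \<longrightarrow> F l n (\<alpha> \<circ> \<beta>) x = F l m \<beta> (F m n \<alpha> x))"

text \<open>An element of (EM)_n = M^(1+n) is a function g : nat => (nat => nat) with
  g i \<in> M for i \<le> n (only the components 0..n matter).\<close>
definition EM_elem :: "nat \<Rightarrow> (nat \<Rightarrow> nat \<Rightarrow> nat) \<Rightarrow> bool" where
  "EM_elem n g \<longleftrightarrow> (\<forall>i\<le>n. g i \<in> M)"

text \<open>An EM-simplicial set: a simplicial set with a levelwise left action
  act n : M^(1+n) x X n -> X n (pointwise multiplication), compatible with the
  structure maps, where alpha^* (g_0..g_n) = (g_alpha(0), .., g_alpha(m)).\<close>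
definition EM_sset ::
  "(nat \<Rightarrow> 'a set) \<Rightarrow> (nat \<Rightarrow> nat \<Rightarrow> (nat \<Rightarrow> nat) \<Rightarrow> 'a \<Rightarrow> 'a)
     \<Rightarrow> (nat \<Rightarrow> (nat \<Rightarrow> nat \<Rightarrow> nat) \<Rightarrow> 'a \<Rightarrow> 'a) \<Rightarrow> bool" where
  "EM_sset X F act \<longleftrightarrow>
     simplicial_set X F \<and>
     (\<forall>n g x. EM_elem n g \<and> x \<in> X n \<longrightarrow> act n g x \<in> X n) \<and>
     (\<forall>n g g' x. EM_elem n g \<and> (\<forall>i\<le>n. g i = g' i) \<and> x \<in> X n \<longrightarrow> act n g x = act n g' x) \<and>
     (\<forall>n x. x \<in> X n \<longrightarrow> act n (\<lambda>i. id) x = x) \<and>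
     (\<forall>n g h x. EM_elem n g \<and> EM_elem n h \<and> x \<in> X n
         \<longrightarrow> act n g (act n h x) = act n (\<lambda>i. g i \<circ> h i) x) \<and>
     (\<forall>m n \<alpha> g x. simp_op m n \<alpha> \<and> EM_elem n g \<and> x \<in> X n
         \<longrightarrow> F m n \<alpha> (act n g x) = act m (\<lambda>j. g (\<alpha> j)) (F m n \<alpha> x))"

definition incl :: "nat \<Rightarrow> (nat \<Rightarrow> nat) \<Rightarrow> nat \<Rightarrow> nat \<Rightarrow> nat" where
  "incl k g = (\<lambda>i. if i = k then g else id)"

definition k_supported ::
  "(nat \<Rightarrow> (nat \<Rightarrow> nat \<Rightarrow> nat) \<Rightarrow> 'a \<Rightarrow> 'a) \<Rightarrow> nat \<Rightarrow> nat \<Rightarrow> nat set \<Rightarrow> 'a \<Rightarrow> bool" where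
  "k_supported act n k A x \<longleftrightarrow> (\<forall>g\<in>M_fix A. act n (incl k g) x = x)"

definition coinf_supported ::
  "(nat \<Rightarrow> (nat \<Rightarrow> nat \<Rightarrow> nat) \<Rightarrow> 'a \<Rightarrow> 'a) \<Rightarrow> nat \<Rightarrow> 'a \<Rightarrow> bool" where
  "coinf_supported act n x \<longleftrightarrow> (\<forall>k\<le>n. \<exists>A. coinfinite A \<and> k_supported act n k A x)"

end

theory Submission
  imports Defs "HOL-Library.Infinite_Set"
begin

lemma psi_exists:
  fixes D :: "nat set"
  assumes "infinite D"
  shows "\<exists>\<psi>. inj_on \<psi> D \<and> \<psi> ` D \<subseteq> D \<and> infinite (D - \<psi> ` D)"
proof -
  define e where "e = enumerate D"
  have bij: "bij_betw e UNIV D" using bij_enumerate[OF assms] e_def by simp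
  have inje: "inj e" using bij bij_betw_def by blast
  define \<psi> where "\<psi> z = e (2 * inv e z)" for z
  have ev: "e (inv e z) = z" if "z \<in> D" for z
    using bij that by (metis bij_betw_def f_inv_into_f)
  have "inj_on \<psi> D"
  proof (rule inj_onI)
    fix a b assume "a \<in> D" "b \<in> D" "\<psi> a = \<psi> b"
    then have "2 * inv e a = 2 * inv e b" using inje \<psi>_def by (simp add: inj_eq)
    then have "inv e a = inv e b" by simp
    then show "a = b" using ev \<open>a \<in> D\<close> \<open>b \<in> D\<close> by metis
  qed
  moreover have "\<psi> ` D \<subseteq> D" using bij \<psi>_def by (auto simp: bij_betw_def)
  moreover have "e ` {m. odd m} \<subseteq> D - \<psi> ` D"
  proof
    fix z assume "z \<in> e ` {m. odd m}"
    then obtain m where m: "odd m" "z = e m" by auto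
    have "z \<in> D" using m bij by (auto simp: bij_betw_def)
    moreover have "z \<notin> \<psi> ` D"
    proof
      assume "z \<in> \<psi> ` D"
      then obtain y where "e m = e (2 * inv e y)" using m \<psi>_def by auto
      then have "m = 2 * inv e y" using inje by (simp add: inj_eq)
      then show False using m by simp
    qed
    ultimately show "z \<in> D - \<psi> ` D" by simp
  qed
  moreover have "infinite (e ` {m. odd m})"
  proof -
    have "infinite {m::nat. odd m}"
    proof -
      have "range (\<lambda>k::nat. 2*k+1) \<subseteq> {m. odd m}" by auto
      moreover have "infinite (range (\<lambda>k::nat. 2*k+1))"
        by (rule range_inj_infinite) (auto simp: inj_def)
      ultimately show ?thesis by (meson infinite_super)
    qed
    then show ?thesis using inje by (simp add: finite_image_iff inj_on_subset)
  qed
  ultimately show ?thesis by (meson infinite_super)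
qed

lemma w_exists:
  fixes B A :: "nat set"
  assumes "coinfinite B"
  shows "\<exists>w. inj w \<and> (\<forall>b\<in>B. w b = b) \<and> w ` A \<subseteq> A \<and> infinite (- range w)"
proof -
  define C where "C = - B"
  have iC: "infinite C" using assms C_def coinfinite_def by (simp add: Compl_eq_Diff_UNIV)
  define D where "D = (if infinite (C \<inter> A) then C \<inter> A else C - A)"
  have iD: "infinite D" using iC D_def
    by (metis Diff_Int Diff_Diff_Int Int_commute finite_Diff2 Diff_Compl double_compl)
  obtain \<psi> where ps: "inj_on \<psi> D" "\<psi> ` D \<subseteq> D" "infinite (D - \<psi> ` D)"
    using psi_exists[OF iD] by blast
  define w where "w z = (if z \<in> D then \<psi> z else z)" for z
  have "inj w"
  proof (rule injI)
    fix a b assume "w a = w b"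
    then show "a = b" using ps unfolding w_def
      by (auto split: if_splits simp: inj_on_def image_subset_iff)
  qed
  moreover have "\<forall>b\<in>B. w b = b" using D_def C_def w_def by auto
  moreover have "w ` A \<subseteq> A"
  proof
    fix y assume "y \<in> w ` A"
    then obtain z where z: "z \<in> A" "y = w z" by auto
    show "y \<in> A"
    proof (cases "infinite (C \<inter> A)")
      case True
      then show ?thesis using z ps(2) D_def w_def by auto
    next
      case False
      then show ?thesis using z D_def w_def by auto
    qed
  qed
  moreover have "D - \<psi> ` D \<subseteq> - range w"
    using w_def by auto
  ultimately show ?thesis using ps(3) by (meson infinite_super)
qed

lemma v_exists:
  fixes u :: "nat \<Rightarrow> nat"
  assumes "inj u" "coinfinite B"
  shows "\<exists>v. inj v \<and> (\<forall>b\<in>B. v (u b) = b) \<and> v ` u ` A \<subseteq> A"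
proof -
  obtain w where w: "inj w" "\<forall>b\<in>B. w b = b" "w ` A \<subseteq> A" "infinite (- range w)"
    using w_exists[OF assms(2)] by blast
  define v where "v z = (if z \<in> range u then w (inv u z) else enumerate (- range w) z)" for z
  have vu: "v (u z) = w z" for z using v_def assms(1) by simp
  have en: "enumerate (- range w) z \<in> - range w" for z using enumerate_in_set[OF w(4)] by blast
  have ie: "inj (enumerate (- range w))" using strict_mono_enumerate[OF w(4)] strict_mono_imp_inj_on by blast
  have "inj v"
  proof (rule injI)
    fix a b assume ab: "v a = v b"
    show "a = b"
    proof (cases "a \<in> range u"; cases "b \<in> range u")
      assume "a \<in> range u" "b \<in> range u"
      then show ?thesis using ab v_def w(1) assms(1) by (auto simp: inj_eq)
    next
      assume "a \<notin> range u" "b \<notin> range u"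
      then show ?thesis using ab v_def ie by (auto simp: inj_eq)
    next
      assume "a \<in> range u" "b \<notin> range u"
      then show ?thesis using ab v_def en[of b] by (metis ComplD rangeI)
    next
      assume "a \<notin> range u" "b \<in> range u"
      then show ?thesis using ab v_def en[of a] by (metis ComplD rangeI)
    qed
  qed
  moreover have "\<forall>b\<in>B. v (u b) = b" using vu w(2) by simp
  moreover have "v ` u ` A \<subseteq> A" using vu w(3) by (auto simp: image_image)
  ultimately show ?thesis by blast
qed

lemma r_exists:
  fixes p q :: "nat \<Rightarrow> nat"
  assumes "inj p" "inj q" "infinite (- S)" "\<forall>z\<in>S. p z = q z"
  shows "\<exists>r. inj r \<and> (\<forall>z\<in>S. r z = p z) \<and> p ` (- S) \<subseteq> r ` (- S) \<and> q ` (- S) \<subseteq> r ` (- S)"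
proof -
  define T where "T = p ` (- S) \<union> q ` (- S)"
  have iT: "infinite T" using T_def assms(1,3) by (simp add: finite_image_iff inj_on_subset)
  have b1: "bij_betw (enumerate (- S)) UNIV (- S)" using bij_enumerate[OF assms(3)] .
  have b2: "bij_betw (enumerate T) UNIV T" using bij_enumerate[OF iT] .
  define h where "h = enumerate T \<circ> inv_into UNIV (enumerate (- S))"
  have bh: "bij_betw h (- S) T" unfolding h_def
    using bij_betw_trans[OF bij_betw_inv_into[OF b1] b2] .
  define r where "r z = (if z \<in> S then p z else h z)" for z
  have disj: "p z \<notin> T" if "z \<in> S" for z
  proof
    assume "p z \<in> T"
    then obtain y where "y \<in> - S" "p z = p y \<or> p z = q y" using T_def by auto
    then show False using that assms(1,2,4) by (metis ComplD inj_eq)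
  qed
  have "inj r"
  proof (rule injI)
    fix a b assume ab: "r a = r b"
    show "a = b"
    proof (cases "a \<in> S"; cases "b \<in> S")
      assume "a \<in> S" "b \<in> S"
      then show ?thesis using ab r_def assms(1) by (auto simp: inj_eq)
    next
      assume "a \<notin> S" "b \<notin> S"
      then show ?thesis using ab r_def bh by (auto simp: bij_betw_def inj_on_def)
    next
      assume "a \<in> S" "b \<notin> S"
      then show ?thesis using ab r_def disj[of a] bh by (auto simp: bij_betw_def)
    next
      assume "a \<notin> S" "b \<in> S"
      then have "h a = p b" using ab r_def by simp
      moreover have "h a \<in> T" using \<open>a \<notin> S\<close> bh by (auto simp: bij_betw_def)
      ultimately show ?thesis using disj[of b] \<open>b \<in> S\<close> by simp
    qed
  qed
  moreover have "r ` (- S) = T" using bh r_def by (auto simp: bij_betw_def image_def)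
  ultimately show ?thesis using r_def T_def by auto
qed

lemma tau_exists:
  fixes p r :: "nat \<Rightarrow> nat"
  assumes "inj p" "\<forall>z\<in>S. r z = p z" "p ` (- S) \<subseteq> r ` (- S)"
  shows "\<exists>\<tau>. inj \<tau> \<and> (\<forall>z\<in>S. \<tau> z = z) \<and> r \<circ> \<tau> = p"
proof -
  define \<tau> where "\<tau> z = (if z \<in> S then z else inv_into (- S) r (p z))" for z
  have c: "r \<circ> \<tau> = p"
  proof
    fix z show "(r \<circ> \<tau>) z = p z"
      using assms(2,3) \<tau>_def by (auto simp: f_inv_into_f)
  qed
  then have "inj \<tau>" using assms(1) by (metis inj_on_imageI2)
  then show ?thesis using c \<tau>_def by auto
qed


lemma id_M: "id \<in> M" by (simp add: M_def)

lemma EM_elem_incl: "g \<in> M \<Longrightarrow> EM_elem n (incl k g)"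
  by (simp add: EM_elem_def incl_def id_M)

lemma act_closed: "EM_sset X F act \<Longrightarrow> EM_elem n g \<Longrightarrow> x \<in> X n \<Longrightarrow> act n g x \<in> X n"
  unfolding EM_sset_def by blast
lemma act_cong: "EM_sset X F act \<Longrightarrow> EM_elem n g \<Longrightarrow> (\<forall>i\<le>n. g i = g' i) \<Longrightarrow> x \<in> X n \<Longrightarrow> act n g x = act n g' x"
  unfolding EM_sset_def by blast
lemma act_id: "EM_sset X F act \<Longrightarrow> x \<in> X n \<Longrightarrow> act n (\<lambda>i. id) x = x"
  unfolding EM_sset_def by blast
lemma act_comp: "EM_sset X F act \<Longrightarrow> EM_elem n g \<Longrightarrow> EM_elem n h \<Longrightarrow> x \<in> X n \<Longrightarrow>
   act n g (act n h x) = act n (\<lambda>i. g i \<circ> h i) x"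
  unfolding EM_sset_def by blast

lemma L1:
  assumes em: "EM_sset X F act" and x: "x \<in> X n"
    and sup: "\<forall>j\<le>n. k_supported act n j (B j) x"
    and w: "\<forall>j\<le>n. w j \<in> M_fix (B j)"
  shows "act n w x = x"
proof -
  define tr where "tr m = (\<lambda>j. if j < m then w j else id)" for m
  have wM: "\<forall>j\<le>n. w j \<in> M" using w M_fix_def by auto
  have emt: "EM_elem n (tr m)" for m using wM id_M tr_def EM_elem_def by auto
  have "act n (tr m) x = x" for m
  proof (induction m)
    case 0
    have "tr 0 = (\<lambda>i. id)" using tr_def by auto
    then show ?case using act_id[OF em x] by (simp only:)
  next
    case (Suc m)
    show ?case
    proof (cases "m \<le> n")
      case True
      have eq: "tr (Suc m) = (\<lambda>j. tr m j \<circ> incl m (w m) j)"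
        by (auto simp: tr_def incl_def)
      have "act n (incl m (w m)) x = x"
        using sup True w unfolding k_supported_def by blast
      have "act n (tr (Suc m)) x = act n (tr m) (act n (incl m (w m)) x)"
        unfolding eq using act_comp[OF em emt EM_elem_incl x, of "w m" m] wM True by simp
      then show ?thesis using \<open>act n (incl m (w m)) x = x\<close> Suc by simp
    next
      case False
      have "act n (tr (Suc m)) x = act n (tr m) x"
        by (rule act_cong[OF em emt _ x]) (use False in \<open>auto simp: tr_def\<close>)
      then show ?thesis using Suc by simp
    qed
  qed
  moreover have "act n w x = act n (tr (Suc n)) x"
    by (rule act_cong[OF em _ _ x]) (use wM in \<open>auto simp: tr_def EM_elem_def\<close>)
  ultimately show ?thesis by simp
qed

lemma AG:
  assumes em: "EM_sset X F act" and y: "y \<in> X n"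
    and sup: "k_supported act n k S y" and cS: "infinite (- S)"
    and p: "p \<in> M" and q: "q \<in> M" and agree: "\<forall>z\<in>S. p z = q z"
  shows "act n (incl k p) y = act n (incl k q) y"
proof -
  obtain r where r: "inj r" "\<forall>z\<in>S. r z = p z" "p ` (- S) \<subseteq> r ` (- S)" "q ` (- S) \<subseteq> r ` (- S)"
    using r_exists[of p q S] p q cS agree unfolding M_def by blast
  have main: "act n (incl k f) y = act n (incl k r) y" if hf: "inj f" "\<forall>z\<in>S. r z = f z" "f ` (- S) \<subseteq> r ` (- S)" for f
  proof -
    obtain \<tau> where t: "inj \<tau>" "\<forall>z\<in>S. \<tau> z = z" "r \<circ> \<tau> = f"
      using tau_exists[OF hf] by blast
    have tM: "\<tau> \<in> M_fix S" using t by (simp add: M_fix_def M_def)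
    have rM: "r \<in> M" using r by (simp add: M_def)
    have "incl k f = (\<lambda>i. incl k r i \<circ> incl k \<tau> i)" using t(3) by (auto simp: incl_def)
    then have "act n (incl k f) y = act n (incl k r) (act n (incl k \<tau>) y)"
      using act_comp[OF em EM_elem_incl[OF rM] EM_elem_incl y, of \<tau>] t(1) by (simp add: M_def)
    also have "\<dots> = act n (incl k r) y" using sup tM unfolding k_supported_def by simp
    finally show ?thesis .
  qed
  have "act n (incl k p) y = act n (incl k r) y" using main[of p] p r unfolding M_def by blast
  moreover have "act n (incl k q) y = act n (incl k r) y" using main[of q] q r agree unfolding M_def by (metis mem_Collect_eq)
  ultimately show ?thesis by simp
qed


theorem lemma2p26:
  fixes X :: "nat \<Rightarrow> 'a set"
    and F :: "nat \<Rightarrow> nat \<Rightarrow> (nat \<Rightarrow> nat) \<Rightarrow> 'a \<Rightarrow> 'a"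
    and act :: "nat \<Rightarrow> (nat \<Rightarrow> nat \<Rightarrow> nat) \<Rightarrow> 'a \<Rightarrow> 'a"
    and u :: "nat \<Rightarrow> nat \<Rightarrow> nat"
  assumes "EM_sset X F act"
    and "x \<in> X n"
    and "coinf_supported act n x"
    and "EM_elem n u"
    and "k \<le> n"
    and "coinfinite A"
    and "k_supported act n k (u k ` A) (act n u x)"
  shows "k_supported act n k A x"
proof -
  note em = assms(1) and x = assms(2)
  obtain B where B: "\<forall>j\<le>n. coinfinite (B j) \<and> k_supported act n j (B j) x"
    using assms(3) unfolding coinf_supported_def by metis
  have uM: "\<forall>j\<le>n. inj (u j)" using assms(4) by (simp add: EM_elem_def M_def)
  have "\<forall>j\<le>n. \<exists>vj. inj vj \<and> (\<forall>b\<in>B j. vj (u j b) = b) \<and> vj ` u j ` (if j = k then A else {}) \<subseteq> (if j = k then A else {})"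
    using v_exists uM B by blast
  then obtain v where v: "\<forall>j\<le>n. inj (v j) \<and> (\<forall>b\<in>B j. v j (u j b) = b) \<and> v j ` u j ` (if j = k then A else {}) \<subseteq> (if j = k then A else {})"
    by metis
  have vM: "EM_elem n v" using v by (simp add: EM_elem_def M_def)
  define y where "y = act n u x"
  have y: "y \<in> X n" using act_closed[OF em assms(4) x] y_def by simp
  have xv: "act n v y = x"
  proof -
    have "act n v y = act n (\<lambda>i. v i \<circ> u i) x" using act_comp[OF em vM assms(4) x] y_def by simp
    also have "\<dots> = x"
      by (rule L1[OF em x, of B]) (use B v uM in \<open>auto simp: M_fix_def M_def intro: inj_compose\<close>)
    finally show ?thesis .
  qed
  have vkA: "v k ` u k ` A \<subseteq> A" using v assms(5) by (metis (full_types))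
  have vkM: "v k \<in> M" using v assms(5) by (simp add: M_def)
  have cS: "infinite (- (u k ` A))"
  proof -
    have "u k ` (- A) \<subseteq> - (u k ` A)" using uM assms(5) by (auto simp: inj_eq)
    moreover have "infinite (u k ` (- A))" using assms(6) uM assms(5)
      by (metis Compl_eq_Diff_UNIV coinfinite_def finite_imageD inj_on_subset subset_UNIV)
    ultimately show ?thesis by (meson infinite_super)
  qed
  show ?thesis unfolding k_supported_def
  proof
    fix g assume g: "g \<in> M_fix A"
    have gM: "g \<in> M" using g M_fix_def by auto
    define v' where "v' = (\<lambda>i. if i = k then id else v i)"
    have v'M: "EM_elem n v'" using vM id_M by (simp add: EM_elem_def v'_def)
    have gvM: "g \<circ> v k \<in> M" using gM vkM by (simp add: M_def inj_compose)
    have "act n (incl k g) x = act n (incl k g) (act n v y)" using xv by simp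
    also have "\<dots> = act n (\<lambda>i. incl k g i \<circ> v i) y"
      using act_comp[OF em EM_elem_incl[OF gM] vM y] by simp
    also have "(\<lambda>i. incl k g i \<circ> v i) = (\<lambda>i. v' i \<circ> incl k (g \<circ> v k) i)"
      by (auto simp: incl_def v'_def)
    also have "act n \<dots> y = act n v' (act n (incl k (g \<circ> v k)) y)"
      using act_comp[OF em v'M EM_elem_incl[OF gvM] y] by simp
    also have "act n (incl k (g \<circ> v k)) y = act n (incl k (v k)) y"
    proof (rule AG[OF em y _ cS gvM vkM])
      show "k_supported act n k (u k ` A) y" using assms(7) y_def by simp
      show "\<forall>z\<in>u k ` A. (g \<circ> v k) z = v k z"
        using vkA g by (auto simp: M_fix_def)
    qed
    also have "act n v' (act n (incl k (v k)) y) = act n (\<lambda>i. v' i \<circ> incl k (v k) i) y"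
      using act_comp[OF em v'M EM_elem_incl[OF vkM] y] by simp
    also have "(\<lambda>i. v' i \<circ> incl k (v k) i) = v"
      by (auto simp: incl_def v'_def)
    finally show "act n (incl k g) x = x" using xv by simp
  qed
qed

end
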